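(* Let $\mathfrak{n}$ be a complex simple Lie algebra of type $B_n$ ($n\ge2$) and let $\mathfrak{n}=\mathfrak{n}_{-3}\oplus\cdots\oplus\mathfrak{n}_3$ be the $|3|$-grading associated to $\Sigma_i=\{\alpha_1,\alpha_i\}$, where $2\le i\le n$. Then there is no graded isomorphism between $\mathfrak{F}_{r,3}$ and $\mathfrak{n}_{-3}\oplus\mathfrak{n}_{-2}\oplus\mathfrak{n}_{-1}$ (for any positive integer $r$).
   Context: Simple roots of $B_n$ are labeled in the standard way, with highest root $\alpha_1+2\alpha_2+\cdots+2\alpha_n$. For a root $\alpha=\sum a_l\alpha_l$ and a set $\Sigma$ of simple roots, $ht_\Sigma(\alpha)=\sum_{\alpha_l\in\Sigma}a_l$; the grading associated to $\Sigma$ is $\mathfrak{n}_m=\bigoplus_{ht_\Sigma(\alpha)=m}\mathfrak{g}_\alpha$ ($m\ne0$), $\mathfrak{n}_0=\mathfrak{h}\oplus\bigoplus_{ht_\Sigma(\alpha)=0}\mathfrak{g}_\alpha$, a $|3|$-grading since the highest root has $\Sigma_i$-height $3$. $\mathfrak{F}_{r,3}$ is the free nilpotent Lie algebra of step $3$ on $r$ generators with canonical grading $\mathfrak{f}_{-1}$ (span of generators), $\mathfrak{f}_{-2}=[\mathfrak{f}_{-1},\mathfrak{f}_{-1}]$, $\mathfrak{f}_{-3}=[\mathfrak{f}_{-1},\mathfrak{f}_{-2}]$; a graded isomorphism is a Lie algebra isomorphism mapping $\mathfrak{f}_{-m}$ onto $\mathfrak{n}_{-m}$ for $m=1,2,3$.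 *)

theory Defs
  imports Complex_Main "HOL-Library.Function_Algebras"
begin

definition cspan :: "(complex \<Rightarrow> 'b \<Rightarrow> 'b) \<Rightarrow> ('b::comm_monoid_add) set \<Rightarrow> 'b set" where
  "cspan sc S = {(\<Sum>v\<in>A. sc (c v) v) | A c. finite A \<and> A \<subseteq> S}"

definition sum3 :: "('b::monoid_add) set \<Rightarrow> 'b set \<Rightarrow> 'b set \<Rightarrow> 'b set" where
  "sum3 A B C = {x + y + z | x y z. x \<in> A \<and> y \<in> B \<and> z \<in> C}"

text \<open>Model: inside the free associative algebra on letters 0..r-1, truncated above
  degree 3 (elements: functions from words to complex numbers), with commutator bracket;
  F_{r,3} is the Lie subalgebra generated by the letters.\<close>

type_synonym fa = "nat list \<Rightarrow> complex"

definition fa_scale :: "complex \<Rightarrow> fa \<Rightarrow> fa" where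
  "fa_scale c a = (\<lambda>w. c * a w)"

definition fa_mul :: "fa \<Rightarrow> fa \<Rightarrow> fa" where
  "fa_mul a b = (\<lambda>w. if length w \<le> 3
      then (\<Sum>k\<in>{1..<length w}. a (take k w) * b (drop k w)) else 0)"

definition fa_br :: "fa \<Rightarrow> fa \<Rightarrow> fa" where
  "fa_br a b = fa_mul a b - fa_mul b a"

definition fa_gen :: "nat \<Rightarrow> fa" where
  "fa_gen i = (\<lambda>w. if w = [i] then 1 else 0)"

definition free_f1 :: "nat \<Rightarrow> fa set" where
  "free_f1 r = cspan fa_scale (fa_gen ` {0..<r})"

definition free_f2 :: "nat \<Rightarrow> fa set" where
  "free_f2 r = cspan fa_scale {fa_br x y | x y. x \<in> free_f1 r \<and> y \<in> free_f1 r}"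

definition free_f3 :: "nat \<Rightarrow> fa set" where
  "free_f3 r = cspan fa_scale {fa_br x y | x y. x \<in> free_f1 r \<and> y \<in> free_f2 r}"

definition free_nil3 :: "nat \<Rightarrow> fa set" where
  "free_nil3 r = sum3 (free_f1 r) (free_f2 r) (free_f3 r)"

section \<open>The simple Lie algebra of type B_n as so(2n+1, C)\<close>

type_synonym cmat = "nat \<Rightarrow> nat \<Rightarrow> complex"

definition m_scale :: "complex \<Rightarrow> cmat \<Rightarrow> cmat" where
  "m_scale c X = (\<lambda>i j. c * X i j)"

definition mmul :: "nat \<Rightarrow> cmat \<Rightarrow> cmat \<Rightarrow> cmat" where
  "mmul N X Y = (\<lambda>i j. if i < N \<and> j < N then (\<Sum>k<N. X i k * Y k j) else 0)"

definition mbr :: "nat \<Rightarrow> cmat \<Rightarrow> cmat \<Rightarrow> cmat" where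
  "mbr N X Y = mmul N X Y - mmul N Y X"

definition mtrans :: "cmat \<Rightarrow> cmat" where
  "mtrans X = (\<lambda>i j. X j i)"

text \<open>Symmetric form on C^(2n+1), indices 0, 1..n, n+1..2n:
  e_0 pairs with itself, e_k pairs with e_(k+n).\<close>
definition formB :: "nat \<Rightarrow> cmat" where
  "formB n = (\<lambda>i j. if (i = 0 \<and> j = 0) \<or> (1 \<le> i \<and> i \<le> n \<and> j = i + n)
                       \<or> (n + 1 \<le> i \<and> i \<le> 2*n \<and> j + n = i) then 1 else 0)"

definition supported :: "nat \<Rightarrow> cmat \<Rightarrow> bool" where
  "supported N X \<longleftrightarrow> (\<forall>i j. (N \<le> i \<or> N \<le> j) \<longrightarrow> X i j = 0)"

definition soB :: "nat \<Rightarrow> cmat set" where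
  "soB n = {X. supported (2*n+1) X \<and>
              mmul (2*n+1) (mtrans X) (formB n) + mmul (2*n+1) (formB n) X = 0}"

definition cartanD :: "nat \<Rightarrow> (nat \<Rightarrow> complex) \<Rightarrow> cmat" where
  "cartanD n t = (\<lambda>i j. if i \<noteq> j then 0
                        else if 1 \<le> i \<and> i \<le> n then t i
                        else if n + 1 \<le> i \<and> i \<le> 2*n then - t (i - n) else 0)"

text \<open>A linear functional on the Cartan subalgebra is given by coefficients a_1..a_n
  (H = cartanD n t maps to sum a_k t_k); coefficients outside 1..n are taken to be 0.\<close>
definition wt_ok :: "nat \<Rightarrow> (nat \<Rightarrow> complex) \<Rightarrow> bool" where
  "wt_ok n a \<longleftrightarrow> (\<forall>k. (k < 1 \<or> n < k) \<longrightarrow> a k = 0)"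

definition root_space :: "nat \<Rightarrow> (nat \<Rightarrow> complex) \<Rightarrow> cmat set" where
  "root_space n a = {X \<in> soB n. \<forall>t. mbr (2*n+1) (cartanD n t) X
                                   = m_scale (\<Sum>k=1..n. a k * t k) X}"

definition is_root :: "nat \<Rightarrow> (nat \<Rightarrow> complex) \<Rightarrow> bool" where
  "is_root n a \<longleftrightarrow> wt_ok n a \<and> a \<noteq> 0 \<and> root_space n a \<noteq> {0}"

text \<open>Standard simple roots: alpha_l = eps_l - eps_(l+1) (l < n), alpha_n = eps_n;
  highest root eps_1 + eps_2 = alpha_1 + 2 alpha_2 + ... + 2 alpha_n.\<close>
definition simple_root :: "nat \<Rightarrow> nat \<Rightarrow> (nat \<Rightarrow> complex)" where
  "simple_root n l = (\<lambda>k. if l < n then (if k = l then 1 else if k = l + 1 then -1 else 0)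
                          else (if k = n then 1 else 0))"

definition root_coeff :: "nat \<Rightarrow> (nat \<Rightarrow> complex) \<Rightarrow> nat \<Rightarrow> complex" where
  "root_coeff n a = (THE c. (\<forall>l. (l < 1 \<or> n < l) \<longrightarrow> c l = 0) \<and>
                            (\<forall>k. a k = (\<Sum>l=1..n. c l * simple_root n l k)))"

definition ht :: "nat \<Rightarrow> nat set \<Rightarrow> (nat \<Rightarrow> complex) \<Rightarrow> complex" where
  "ht n \<Sigma> a = (\<Sum>l\<in>\<Sigma>. root_coeff n a l)"

text \<open>Graded piece n_m (m \<noteq> 0) of the grading associated to the set of simple roots
  with indices in \<Sigma>.\<close>
definition grade :: "nat \<Rightarrow> nat set \<Rightarrow> int \<Rightarrow> cmat set" where
  "grade n \<Sigma> m = cspan m_scale (\<Union>{root_space n a | a. is_root n a \<and> ht n \<Sigma> a = of_int m})"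

definition graded_iso :: "nat \<Rightarrow> nat \<Rightarrow> nat set \<Rightarrow> (fa \<Rightarrow> cmat) \<Rightarrow> bool" where
  "graded_iso r n \<Sigma> \<phi> \<longleftrightarrow>
     bij_betw \<phi> (free_nil3 r) (sum3 (grade n \<Sigma> (-1)) (grade n \<Sigma> (-2)) (grade n \<Sigma> (-3))) \<and>
     (\<forall>x\<in>free_nil3 r. \<forall>y\<in>free_nil3 r. \<forall>a b.
        \<phi> (fa_scale a x + fa_scale b y) = m_scale a (\<phi> x) + m_scale b (\<phi> y)) \<and>
     (\<forall>x\<in>free_nil3 r. \<forall>y\<in>free_nil3 r. \<phi> (fa_br x y) = mbr (2*n+1) (\<phi> x) (\<phi> y)) \<and>
     \<phi> ` free_f1 r = grade n \<Sigma> (-1) \<and>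
     \<phi> ` free_f2 r = grade n \<Sigma> (-2) \<and>
     \<phi> ` free_f3 r = grade n \<Sigma> (-3)"

end

theory Submission
  imports Defs
begin


lemma sum_fun_apply: "(\<Sum>v\<in>A. f v) (w::'a) = (\<Sum>v\<in>A. f v w)"
  by (induction A rule: infinite_finite_induct) auto

lemma f1_len: assumes "x \<in> free_f1 r" "length w \<noteq> 1" shows "x w = 0"
proof -
  obtain A c where x: "x = (\<Sum>v\<in>A. fa_scale (c v) v)" "A \<subseteq> fa_gen ` {0..<r}"
    using assms(1) unfolding free_f1_def cspan_def by blast
  have "\<forall>v\<in>A. fa_scale (c v) v w = 0"
  proof
    fix v assume "v \<in> A"
    then obtain j where "v = fa_gen j" using x(2) by blast
    then show "fa_scale (c v) v w = 0" using assms(2) by (auto simp: fa_scale_def fa_gen_def)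
  qed
  then show ?thesis using x(1) by (simp add: sum_fun_apply)
qed

lemma br_br_val:
  assumes "\<And>w. length w \<noteq> 1 \<Longrightarrow> x w = 0" "\<And>w. length w \<noteq> 1 \<Longrightarrow> y w = 0"
  shows "fa_br x (fa_br x y) [j,k,j] = 2 * x [j] * (x [k] * y [j] - x [j] * y [k])"
proof -
  have e: "{1..<3::nat} = {1,2}" "{1..<2::nat} = {1}" by auto
  have "x [] = 0" "y [] = 0" "x [j,k] = 0" "y [j,k] = 0" "x [k,j] = 0" "y [k,j] = 0"
    "x [j,k,j] = 0" "y [j,k,j] = 0"
    using assms by auto
  then show ?thesis unfolding fa_br_def fa_mul_def
    by (simp add: e algebra_simps)
qed

lemma free_dep:
  assumes "x \<in> free_f1 r" "y \<in> free_f1 r" "fa_br x (fa_br x y) = 0"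
  shows "x = 0 \<or> (\<exists>l. y = fa_scale l x)"
proof (cases "x = 0")
  case False
  then obtain w where w: "x w \<noteq> 0" by (auto simp: fun_eq_iff)
  then have "length w = 1" using f1_len[OF assms(1)] by blast
  then obtain j where j: "w = [j]" by (cases w) auto
  have xl: "\<And>w. length w \<noteq> 1 \<Longrightarrow> x w = 0" "\<And>w. length w \<noteq> 1 \<Longrightarrow> y w = 0"
    using f1_len assms by blast+
  have key: "x [k] * y [j] = x [j] * y [k]" for k
  proof -
    have "fa_br x (fa_br x y) [j,k,j] = 0" using assms(3) by simp
    then have "2 * x [j] * (x [k] * y [j] - x [j] * y [k]) = 0" using br_br_val[OF xl] by simp
    then show ?thesis using w j by simp
  qed
  have "y = fa_scale (y [j] / x [j]) x"
  proof
    fix u show "y u = fa_scale (y [j] / x [j]) x u"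
    proof (cases "length u = 1")
      case True
      then obtain k where "u = [k]" by (cases u) auto
      then show ?thesis using key[of k] w j by (simp add: fa_scale_def field_simps)
    next
      case False then show ?thesis using xl by (simp add: fa_scale_def)
    qed
  qed
  then show ?thesis by blast
qed simp



definition E :: "nat \<Rightarrow> nat \<Rightarrow> cmat" where
  "E a b = (\<lambda>i j. if i = a \<and> j = b then 1 else 0)"

lemma mmul_E_right: "a < N \<Longrightarrow> mmul N X (E a b) = (\<lambda>i j. if i < N \<and> j < N \<and> j = b then X i a else 0)"
  by (auto simp: mmul_def E_def fun_eq_iff if_distrib[where f="\<lambda>z. _ * z"] cong: if_cong)

lemma mmul_E_left: "b < N \<Longrightarrow> mmul N (E a b) X = (\<lambda>i j. if i < N \<and> j < N \<and> i = a then X b j else 0)"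
  by (auto simp: mmul_def E_def fun_eq_iff if_distrib[where f="\<lambda>z. z * _"] cong: if_cong)

lemma mmul_E_E: "a < N \<Longrightarrow> b < N \<Longrightarrow> c < N \<Longrightarrow> d < N \<Longrightarrow>
  mmul N (E a b) (E c d) = (if b = c then E a d else 0)"
  by (simp add: mmul_E_left) (auto simp: E_def fun_eq_iff)

lemma mmul_diff_left: "mmul N (A - B) C = mmul N A C - mmul N B C"
  by (auto simp: mmul_def fun_eq_iff algebra_simps sum_subtractf)
lemma mmul_diff_right: "mmul N C (A - B) = mmul N C A - mmul N C B"
  by (auto simp: mmul_def fun_eq_iff algebra_simps sum_subtractf)
lemma mmul_zero_left[simp]: "mmul N 0 C = 0"
  by (auto simp: mmul_def fun_eq_iff)
lemma mmul_zero_right[simp]: "mmul N C 0 = 0"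
  by (auto simp: mmul_def fun_eq_iff)
lemma mtrans_E: "mtrans (E a b) = E b a" by (auto simp: mtrans_def E_def fun_eq_iff)
lemma mtrans_diff: "mtrans (A - B) = mtrans A - mtrans B" by (auto simp: mtrans_def fun_eq_iff)

lemma E_neq: "E a b \<noteq> E c d \<Longrightarrow> True" by simp

lemma brX: 
  fixes n i :: nat
  assumes "2 \<le> n" "2 \<le> i" "i \<le> n"
  defines "N \<equiv> 2*n+1"
  defines "X \<equiv> E 2 1 - E (1+n) (2+n)"
  defines "Y \<equiv> E 0 i - E (i+n) 0"
  shows "mbr N X (mbr N X Y) = 0"
proof (cases "i = 2")
  case True
  have l: "2 < N" "1 < N" "1+n < N" "2+n < N" "0 < N" "i < N" "i+n < N"
    using assms unfolding N_def by auto
  show ?thesis unfolding X_def Y_def mbr_def using True l assms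
    by (simp add: mmul_diff_left mmul_diff_right mmul_E_E)
next
  case False
  have l: "2 < N" "1 < N" "1+n < N" "2+n < N" "0 < N" "i < N" "i+n < N"
    using assms unfolding N_def by auto
  show ?thesis unfolding X_def Y_def mbr_def using False l assms
    by (simp add: mmul_diff_left mmul_diff_right mmul_E_E)
qed



lemma sr_sum:
  "(\<Sum>l=1..n. c l * simple_root n l k) =
     (if 1 \<le> k \<and> k \<le> n then c k else 0) - (if 2 \<le> k \<and> k \<le> n then c (k-1) else 0)"
proof -
  have "(\<Sum>l=1..n. c l * simple_root n l k) =
        (\<Sum>l=1..n. (if k = l then c l else 0) - (if l = k - 1 then (if 2 \<le> k \<and> k \<le> n then c l else 0) else 0))"
    by (rule sum.cong) (auto simp: simple_root_def)
  also have "\<dots> = (if 1 \<le> k \<and> k \<le> n then c k else 0) - (if 2 \<le> k \<and> k \<le> n then c (k-1) else 0)"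
    by (simp add: sum_subtractf sum.delta) arith
  finally show ?thesis .
qed

lemma root_coeff_eq:
  assumes c0: "\<forall>l. (l < 1 \<or> n < l) \<longrightarrow> c l = 0"
    and ca: "\<forall>k. a k = (\<Sum>l=1..n. c l * simple_root n l k)"
  shows "root_coeff n a = c"
  unfolding root_coeff_def
proof (rule the_equality)
  show "(\<forall>l. (l < 1 \<or> n < l) \<longrightarrow> c l = 0) \<and> (\<forall>k. a k = (\<Sum>l=1..n. c l * simple_root n l k))"
    using assms by blast
next
  fix d assume d: "(\<forall>l. (l < 1 \<or> n < l) \<longrightarrow> d l = 0) \<and> (\<forall>k. a k = (\<Sum>l=1..n. d l * simple_root n l k))"
  have eq: "(if 1 \<le> k \<and> k \<le> n then c k else 0) - (if 2 \<le> k \<and> k \<le> n then c (k-1) else 0)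
      = (if 1 \<le> k \<and> k \<le> n then d k else 0) - (if 2 \<le> k \<and> k \<le> n then d (k-1) else 0)" for k
    using d ca by (metis sr_sum)
  have "d k = c k" for k
  proof (induction k)
    case 0 then show ?case using c0 d by auto
  next
    case (Suc m)
    show ?case
    proof (cases "Suc m \<le> n")
      case True
      then show ?thesis using eq[of "Suc m"] Suc by (cases m) auto
    next
      case False then show ?thesis using c0 d by auto
    qed
  qed
  then show "d = c" by auto
qed


definition partner :: "nat \<Rightarrow> nat \<Rightarrow> nat" where
  "partner n p = (if p = 0 then 0 else if p \<le> n then p + n else p - n)"

lemma formB_row: "p < 2*n+1 \<Longrightarrow> formB n p j = (if j = partner n p then 1 else 0)"
  unfolding formB_def partner_def by auto

lemma formB_col: "p < 2*n+1 \<Longrightarrow> formB n j p = (if j = partner n p then 1 else 0)"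
  unfolding formB_def partner_def by auto

lemma partner_lt: "p < 2*n+1 \<Longrightarrow> partner n p < 2*n+1"
  unfolding partner_def by auto

lemma partner_lt': "p < Suc (2*n) \<Longrightarrow> partner n p < Suc (2*n)"
  unfolding partner_def by auto

lemma mmul_E_B: "a < 2*n+1 \<Longrightarrow> b < 2*n+1 \<Longrightarrow> mmul (2*n+1) (E a b) (formB n) = E a (partner n b)"
  apply (simp add: mmul_E_left)
  apply (auto simp: fun_eq_iff E_def formB_row partner_lt partner_lt')
  done

lemma mmul_B_E: "a < 2*n+1 \<Longrightarrow> b < 2*n+1 \<Longrightarrow> mmul (2*n+1) (formB n) (E a b) = E (partner n a) b"
  apply (simp add: mmul_E_right)
  apply (auto simp: fun_eq_iff E_def formB_col partner_lt partner_lt')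
  done

lemma supp_EE: "a < N \<Longrightarrow> b < N \<Longrightarrow> c < N \<Longrightarrow> d < N \<Longrightarrow> supported N (E a b - E c d)"
  by (auto simp: supported_def E_def)

lemma X_soB:
  assumes "2 \<le> n"
  shows "E 2 1 - E (1+n) (2+n) \<in> soB n"
proof -
  have l: "2 < 2*n+1" "1 < 2*n+1" "1+n < 2*n+1" "2+n < 2*n+1" using assms by auto
  have p: "partner n 2 = 2+n" "partner n 1 = 1+n" "partner n (1+n) = 1" "partner n (2+n) = 2"
    using assms by (auto simp: partner_def)
  have "mmul (2*n+1) (mtrans (E 2 1 - E (1+n) (2+n))) (formB n) + mmul (2*n+1) (formB n) (E 2 1 - E (1+n) (2+n)) = 0"
    unfolding mtrans_diff mtrans_E mmul_diff_left mmul_diff_right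
    using l by (simp only: mmul_E_B mmul_B_E p) simp
  then show ?thesis unfolding soB_def using supp_EE[OF l(1) l(2) l(3) l(4)] by blast
qed

lemma Y_soB:
  assumes "2 \<le> n" "2 \<le> i" "i \<le> n"
  shows "E 0 i - E (i+n) 0 \<in> soB n"
proof -
  have l: "0 < 2*n+1" "i < 2*n+1" "i+n < 2*n+1" using assms by auto
  have p: "partner n 0 = 0" "partner n i = i+n" "partner n (i+n) = i"
    using assms by (auto simp: partner_def)
  have "mmul (2*n+1) (mtrans (E 0 i - E (i+n) 0)) (formB n) + mmul (2*n+1) (formB n) (E 0 i - E (i+n) 0) = 0"
    unfolding mtrans_diff mtrans_E mmul_diff_left mmul_diff_right
    using l by (simp only: mmul_E_B mmul_B_E p) simp
  then show ?thesis unfolding soB_def using supp_EE[OF l(1) l(2) l(3) l(1)] by blast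
qed

lemma mbr_diag_E:
  assumes "\<And>i j. i \<noteq> j \<Longrightarrow> D i j = 0" "a < N" "b < N"
  shows "mbr N D (E a b) = m_scale (D a a - D b b) (E a b)"
  using assms unfolding mbr_def
  by (simp add: mmul_E_left mmul_E_right) (auto simp: fun_eq_iff m_scale_def E_def)

lemma mbr_diff_right: "mbr N D (A - B) = mbr N D A - mbr N D B"
  by (simp add: mbr_def mmul_diff_left mmul_diff_right)

lemma m_scale_diff: "m_scale c (A - B) = m_scale c A - m_scale c B"
  by (auto simp: m_scale_def fun_eq_iff algebra_simps)

lemma cartan_diag: "i \<noteq> j \<Longrightarrow> cartanD n t i j = 0" by (simp add: cartanD_def)

lemma brX_cartan:
  assumes "2 \<le> n" "2 \<le> i" "i \<le> n"
  shows "mbr (2*n+1) (cartanD n t) (E 2 1 - E (1+n) (2+n)) = m_scale (t 2 - t 1) (E 2 1 - E (1+n) (2+n))"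
proof -
  have l: "2 < 2*n+1" "1 < 2*n+1" "1+n < 2*n+1" "2+n < 2*n+1" using assms by auto
  show ?thesis
    using l assms by (simp add: mbr_diff_right m_scale_diff mbr_diag_E cartan_diag) (simp add: cartanD_def)
qed
lemma brY_cartan:
  assumes "2 \<le> n" "2 \<le> i" "i \<le> n"
  shows "mbr (2*n+1) (cartanD n t) (E 0 i - E (i+n) 0) = m_scale (- t i) (E 0 i - E (i+n) 0)"
proof -
  have l: "0 < 2*n+1" "i < 2*n+1" "i+n < 2*n+1" using assms by auto
  have c: "cartanD n t 0 0 = 0" "cartanD n t i i = t i" "cartanD n t (i+n) (i+n) = - t i"
    using assms by (auto simp: cartanD_def)
  have d: "\<And>a b. a \<noteq> b \<Longrightarrow> cartanD n t a b = 0" by (rule cartan_diag)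
  have e1: "mbr (2*n+1) (cartanD n t) (E 0 i) = m_scale (cartanD n t 0 0 - cartanD n t i i) (E 0 i)"
    by (rule mbr_diag_E[OF d l(1) l(2)])
  have e2: "mbr (2*n+1) (cartanD n t) (E (i+n) 0) = m_scale (cartanD n t (i+n) (i+n) - cartanD n t 0 0) (E (i+n) 0)"
    by (rule mbr_diag_E[OF d l(3) l(1)])
  show ?thesis unfolding mbr_diff_right m_scale_diff e1 e2 c by simp
qed

lemma in_grade:
  assumes "X \<in> root_space n a" "is_root n a" "ht n S a = of_int m"
  shows "X \<in> grade n S m"
proof -
  let ?U = "\<Union>{root_space n a | a. is_root n a \<and> ht n S a = of_int m}"
  have "root_space n a \<in> {root_space n a | a. is_root n a \<and> ht n S a = of_int m}"
    using assms(2,3) by blast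
  then have XU: "X \<in> ?U" using assms(1) by (rule UnionI)
  have "X = (\<Sum>v\<in>{X}. m_scale ((\<lambda>_. 1) v) v)" by (simp add: m_scale_def)
  then have "\<exists>A c. X = (\<Sum>v\<in>A. m_scale (c v) v) \<and> finite A \<and> A \<subseteq> ?U"
    using XU by (intro exI[of _ "{X}"] exI[of _ "\<lambda>_. 1"]) simp
  then show ?thesis unfolding grade_def cspan_def by (simp only: mem_Collect_eq)
qed

lemma X_grade:
  assumes "2 \<le> n" "2 \<le> i" "i \<le> n"
  shows "E 2 1 - E (1+n) (2+n) \<in> grade n {1,i} (-1)"
proof -
  define a :: "nat \<Rightarrow> complex" where "a = (\<lambda>k. if k = 1 then -1 else if k = 2 then 1 else 0)"
  define c :: "nat \<Rightarrow> complex" where "c = (\<lambda>l. if l = 1 then -1 else 0)"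
  define X where "X = E 2 1 - E (1+n) (2+n)"
  have rc: "root_coeff n a = c"
  proof (rule root_coeff_eq)
    show "\<forall>l. l < 1 \<or> n < l \<longrightarrow> c l = 0" using assms by (auto simp: c_def)
    show "\<forall>k. a k = (\<Sum>l = 1..n. c l * simple_root n l k)"
      unfolding sr_sum using assms by (auto simp: a_def c_def)
  qed
  have s: "(\<Sum>k=1..n. a k * t k) = t 2 - t 1" for t
  proof -
    have "(\<Sum>k=1..n. a k * t k) = (\<Sum>k=1..n. (if k = 2 then t k else 0) - (if k = 1 then t k else 0))"
      by (rule sum.cong) (auto simp: a_def)
    also have "\<dots> = t 2 - t 1" using assms by (simp add: sum_subtractf sum.delta')
    finally show ?thesis .
  qed
  have l: "2 < 2*n+1" "1 < 2*n+1" "1+n < 2*n+1" "2+n < 2*n+1" using assms by auto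
  have br: "mbr (2*n+1) (cartanD n t) X = m_scale (t 2 - t 1) X" for t
    unfolding X_def by (rule brX_cartan[OF assms])
  have Xr: "X \<in> root_space n a" unfolding root_space_def using X_soB[OF assms(1)] br s X_def by auto
  have Xnz: "X \<noteq> 0" unfolding X_def using assms by (auto simp: E_def fun_eq_iff)
  have w: "wt_ok n a" unfolding wt_ok_def using assms by (auto simp: a_def)
  have "a i \<noteq> 0 \<or> a 1 \<noteq> 0" using assms by (auto simp: a_def)
  then have an: "a \<noteq> 0" using assms by (metis zero_fun_apply)
  have "root_space n a \<noteq> {0}" using Xr Xnz by blast
  then have isr: "is_root n a" unfolding is_root_def using w an by blast
  have "ht n {1,i} a = -1" using assms by (simp add: ht_def rc c_def)
  then show ?thesis using in_grade[OF Xr isr, of "{1,i}" "-1"] X_def by simp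
qed

lemma Y_grade:
  assumes "2 \<le> n" "2 \<le> i" "i \<le> n"
  shows "E 0 i - E (i+n) 0 \<in> grade n {1,i} (-1)"
proof -
  define a :: "nat \<Rightarrow> complex" where "a = (\<lambda>k. if k = i then -1 else 0)"
  define c :: "nat \<Rightarrow> complex" where "c = (\<lambda>l. if i \<le> l \<and> l \<le> n then -1 else 0)"
  define X where "X = E 0 i - E (i+n) 0"
  have rc: "root_coeff n a = c"
  proof (rule root_coeff_eq)
    show "\<forall>l. l < 1 \<or> n < l \<longrightarrow> c l = 0" using assms by (auto simp: c_def)
    show "\<forall>k. a k = (\<Sum>l = 1..n. c l * simple_root n l k)"
      unfolding sr_sum using assms by (auto simp: a_def c_def)
  qed
  have s: "(\<Sum>k=1..n. a k * t k) = - t i" for t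
  proof -
    have "(\<Sum>k=1..n. a k * t k) = (\<Sum>k=1..n. - (if k = i then t k else 0))"
      by (rule sum.cong) (auto simp: a_def)
    also have "\<dots> = - t i" using assms by (simp add: sum_negf sum.delta')
    finally show ?thesis .
  qed
  have l: "0 < 2*n+1" "i < 2*n+1" "i+n < 2*n+1" using assms by auto
  have br: "mbr (2*n+1) (cartanD n t) X = m_scale (- t i) X" for t
    unfolding X_def by (rule brY_cartan[OF assms])
  have Xr: "X \<in> root_space n a" unfolding root_space_def using Y_soB[OF assms] br s X_def by auto
  have Xnz: "X \<noteq> 0" unfolding X_def using assms by (auto simp: E_def fun_eq_iff)
  have w: "wt_ok n a" unfolding wt_ok_def using assms by (auto simp: a_def)
  have "a i \<noteq> 0 \<or> a 1 \<noteq> 0" using assms by (auto simp: a_def)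
  then have an: "a \<noteq> 0" using assms by (metis zero_fun_apply)
  have "root_space n a \<noteq> {0}" using Xr Xnz by blast
  then have isr: "is_root n a" unfolding is_root_def using w an by blast
  have "ht n {1,i} a = -1" using assms by (simp add: ht_def rc c_def)
  then show ?thesis using in_grade[OF Xr isr, of "{1,i}" "-1"] X_def by simp
qed


lemma cspan_zero: "0 \<in> cspan sc S"
proof -
  have "\<exists>A c. 0 = (\<Sum>v\<in>A. sc (c v) v) \<and> finite A \<and> A \<subseteq> S"
    by (intro exI[of _ "{}"] exI[of _ "\<lambda>_. 0"]) simp
  then show ?thesis unfolding cspan_def by (simp only: mem_Collect_eq)
qed

lemma cspan_single:
  assumes "v \<in> S" "sc 1 v = v"
  shows "v \<in> cspan sc S"
proof -
  have "\<exists>A c. v = (\<Sum>u\<in>A. sc (c u) u) \<and> finite A \<and> A \<subseteq> S"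
    using assms by (intro exI[of _ "{v}"] exI[of _ "\<lambda>_. 1"]) simp
  then show ?thesis unfolding cspan_def by (simp only: mem_Collect_eq)
qed

lemma fa_scale_one: "fa_scale 1 v = v" by (simp add: fa_scale_def)

lemma in_nil1: "u \<in> free_f1 r \<Longrightarrow> u \<in> free_nil3 r"
  unfolding free_nil3_def sum3_def free_f2_def free_f3_def
  by (rule CollectI, rule exI[of _ u], rule exI[of _ 0], rule exI[of _ 0]) (simp add: cspan_zero)

lemma in_nil2: "u \<in> free_f2 r \<Longrightarrow> u \<in> free_nil3 r"
  unfolding free_nil3_def sum3_def free_f1_def free_f3_def
  by (rule CollectI, rule exI[of _ 0], rule exI[of _ u], rule exI[of _ 0]) (simp add: cspan_zero)

lemma in_nil3: "u \<in> free_f3 r \<Longrightarrow> u \<in> free_nil3 r"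
  unfolding free_nil3_def sum3_def free_f1_def free_f2_def
  by (rule CollectI, rule exI[of _ 0], rule exI[of _ 0], rule exI[of _ u]) (simp add: cspan_zero)

lemma br_f2: "u \<in> free_f1 r \<Longrightarrow> v \<in> free_f1 r \<Longrightarrow> fa_br u v \<in> free_f2 r"
  unfolding free_f2_def by (rule cspan_single) (auto simp: fa_scale_one)

lemma br_f3: "u \<in> free_f1 r \<Longrightarrow> v \<in> free_f2 r \<Longrightarrow> fa_br u v \<in> free_f3 r"
  unfolding free_f3_def by (rule cspan_single) (auto simp: fa_scale_one)

theorem theorem4p6:
  fixes n i r :: nat
  assumes "2 \<le> n" and "2 \<le> i" and "i \<le> n" and "0 < r"
  shows "\<not> (\<exists>\<phi>. graded_iso r n {1, i} \<phi>)"
proof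
  assume "\<exists>\<phi>. graded_iso r n {1, i} \<phi>"
  then obtain \<phi> where g: "graded_iso r n {1, i} \<phi>" by blast
  define X where "X = E 2 1 - E (1+n) (2+n)"
  define Y where "Y = E 0 i - E (i+n) 0"
  have bij: "bij_betw \<phi> (free_nil3 r) (sum3 (grade n {1,i} (-1)) (grade n {1,i} (-2)) (grade n {1,i} (-3)))"
    using g unfolding graded_iso_def by (elim conjE)
  have lin: "\<forall>x\<in>free_nil3 r. \<forall>y\<in>free_nil3 r. \<forall>a b.
        \<phi> (fa_scale a x + fa_scale b y) = m_scale a (\<phi> x) + m_scale b (\<phi> y)"
    using g unfolding graded_iso_def by (elim conjE)
  have hom: "\<forall>x\<in>free_nil3 r. \<forall>y\<in>free_nil3 r. \<phi> (fa_br x y) = mbr (2*n+1) (\<phi> x) (\<phi> y)"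
    using g unfolding graded_iso_def by (elim conjE)
  have im1: "\<phi> ` free_f1 r = grade n {1,i} (-1)"
    using g unfolding graded_iso_def by (elim conjE)
  have "X \<in> \<phi> ` free_f1 r" using im1 X_grade[OF assms(1-3)] X_def by simp
  then obtain x where x: "x \<in> free_f1 r" "\<phi> x = X" by blast
  have "Y \<in> \<phi> ` free_f1 r" using im1 Y_grade[OF assms(1-3)] Y_def by simp
  then obtain y where y: "y \<in> free_f1 r" "\<phi> y = Y" by blast
  have xn: "x \<in> free_nil3 r" "y \<in> free_nil3 r" using x y in_nil1 by blast+
  have xy2: "fa_br x y \<in> free_f2 r" using br_f2 x y by blast
  have xy3: "fa_br x (fa_br x y) \<in> free_f3 r" using br_f3 x xy2 by blast
  have zn: "(0::fa) \<in> free_nil3 r" using in_nil1 cspan_zero unfolding free_f1_def by blast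
  have "\<phi> (fa_scale 0 x + fa_scale 0 x) = m_scale 0 (\<phi> x) + m_scale 0 (\<phi> x)"
    using lin[rule_format, OF xn(1) xn(1), of 0 0] .
  moreover have "fa_scale 0 x + fa_scale 0 x = 0" by (simp add: fa_scale_def fun_eq_iff)
  moreover have "m_scale 0 (\<phi> x) + m_scale 0 (\<phi> x) = 0" by (simp add: m_scale_def fun_eq_iff)
  ultimately have phi0: "\<phi> 0 = 0" by simp
  have "\<phi> (fa_br x (fa_br x y)) = mbr (2*n+1) (\<phi> x) (\<phi> (fa_br x y))"
    using hom[rule_format, OF xn(1) in_nil2[OF xy2]] .
  also have "\<phi> (fa_br x y) = mbr (2*n+1) X Y" using hom[rule_format, OF xn(1) xn(2)] x y by simp
  finally have "\<phi> (fa_br x (fa_br x y)) = mbr (2*n+1) X (mbr (2*n+1) X Y)" using x by simp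
  also have "\<dots> = 0" unfolding X_def Y_def by (rule brX[OF assms(1-3)])
  finally have "\<phi> (fa_br x (fa_br x y)) = \<phi> 0" using phi0 by simp
  moreover have "inj_on \<phi> (free_nil3 r)" using bij by (simp add: bij_betw_def)
  ultimately have "fa_br x (fa_br x y) = 0" using in_nil3[OF xy3] zn by (meson inj_onD)
  then have "x = 0 \<or> (\<exists>l. y = fa_scale l x)" using free_dep x y by blast
  then show False
  proof
    assume "x = 0"
    then have "X = 0" using x phi0 by simp
    moreover have "X 2 1 = 1" unfolding X_def using assms by (simp add: E_def)
    ultimately show False by simp
  next
    assume "\<exists>l. y = fa_scale l x"
    then obtain l where l: "y = fa_scale l x" by blast
    have "fa_scale l x + fa_scale 0 x = y" using l by (simp add: fa_scale_def fun_eq_iff)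
    then have "Y = m_scale l X + m_scale 0 X" using lin[rule_format, OF xn(1) xn(1), of l 0] x y by simp
    then have "Y 0 i = l * X 0 i" by (simp add: m_scale_def)
    moreover have "Y 0 i = 1" "X 0 i = 0" unfolding X_def Y_def using assms by (auto simp: E_def)
    ultimately show False by simp
  qed
qed

end
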